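(* Let $G=(m,n,\boldsymbol{c},\boldsymbol{d},r_{\max},r_{\min})$ be an interbank lending game, and let $\Phi:\boldsymbol{S}\to\mathbb{R}$ be defined by $$\Phi(\boldsymbol{s})=\sum_{j\in B}\sum_{i\in L}\bigl(r_j(\boldsymbol{s},i)-r_{\min}\bigr)s_{ij},\qquad r_j(\boldsymbol{s},z)=(r_{\min}-r_{\max})\frac{\sum_{i=1}^{z}s_{ij}}{d_j}+r_{\max}.$$ Then $G$ is an exact potential game with potential function $\Phi$, i.e. for every lender $k\in L$, all $s_k,s_k'\in S_k$ and all $\boldsymbol{s}_{-k}\in\boldsymbol{S}_{-k}$, $$\Phi(s_k',\boldsymbol{s}_{-k})-\Phi(s_k,\boldsymbol{s}_{-k})=u_k(s_k',\boldsymbol{s}_{-k})-u_k(s_k,\boldsymbol{s}_{-k}).$$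
   Context: An interbank lending game $G=(m,n,\boldsymbol{c},\boldsymbol{d},r_{\max},r_{\min})$ consists of positive integers $m,n$, budgets $\boldsymbol{c}=(c_1,\dots,c_m)\in\mathbb{R}_{>0}^m$, demands $\boldsymbol{d}=(d_1,\dots,d_n)\in\mathbb{R}_{>0}^n$ and reals $0<r_{\min}<r_{\max}$. The players are the lenders $L=\{1,\dots,m\}$; $B=\{1,\dots,n\}$ is the set of borrowers. Lender $i$'s strategy set is $S_i=\{s_i=(s_{i1},\dots,s_{in})\in\mathbb{R}_{\ge0}^n:\sum_{j\in B}s_{ij}\le c_i\}$, the strategy space is $\boldsymbol{S}=\prod_{i\in L}S_i$, a strategy profile is $\boldsymbol{s}=(s_{ij})_{i\in L,j\in B}\in\boldsymbol{S}$, $\boldsymbol{s}_{-i}$ denotes the strategies of all lenders other than $i$, $\boldsymbol{S}_{-i}=\prod_{k\ne i}S_k$, and $(s_i',\boldsymbol{s}_{-i})$ is the profile where $i$ plays $s_i'$ and the others play as in $\boldsymbol{s}_{-i}$. The interest rate of borrower $j$ is $r_j(\boldsymbol{s})=(r_{\min}-r_{\max})\frac{\sum_{i\in L}s_{ij}}{d_j}+r_{\max}$, and lender $i$'s utility is $u_i(\boldsymbol{s})=\sum_{j\in B}(r_j(\boldsymbol{s})-r_{\min})s_{ij}$. *)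

theory Defs
  imports Complex_Main
begin

text \<open>Lenders are 1..m, borrowers 1..n. A strategy of a lender is a function
  nat => real (only the values on 1..n matter); a strategy profile is
  s :: nat => nat => real with s i j the amount lender i lends to borrower j.\<close>

definition strategy_set :: "nat \<Rightarrow> real \<Rightarrow> (nat \<Rightarrow> real) set" where
  "strategy_set n ci = {x. (\<forall>j\<in>{1..n}. x j \<ge> 0) \<and> (\<Sum>j=1..n. x j) \<le> ci}"

definition profile_space :: "nat \<Rightarrow> nat \<Rightarrow> (nat \<Rightarrow> real) \<Rightarrow> (nat \<Rightarrow> nat \<Rightarrow> real) set" where
  "profile_space m n c = {s. \<forall>i\<in>{1..m}. s i \<in> strategy_set n (c i)}"

definition interest_rate :: "nat \<Rightarrow> (nat \<Rightarrow> real) \<Rightarrow> real \<Rightarrow> real \<Rightarrow> (nat \<Rightarrow> nat \<Rightarrow> real) \<Rightarrow> nat \<Rightarrow> real" where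
  "interest_rate m d rmax rmin s j = (rmin - rmax) * (\<Sum>i=1..m. s i j) / d j + rmax"

definition utility :: "nat \<Rightarrow> nat \<Rightarrow> (nat \<Rightarrow> real) \<Rightarrow> real \<Rightarrow> real \<Rightarrow> (nat \<Rightarrow> nat \<Rightarrow> real) \<Rightarrow> nat \<Rightarrow> real" where
  "utility m n d rmax rmin s i = (\<Sum>j=1..n. (interest_rate m d rmax rmin s j - rmin) * s i j)"

definition partial_rate :: "(nat \<Rightarrow> real) \<Rightarrow> real \<Rightarrow> real \<Rightarrow> (nat \<Rightarrow> nat \<Rightarrow> real) \<Rightarrow> nat \<Rightarrow> nat \<Rightarrow> real" where
  "partial_rate d rmax rmin s j z = (rmin - rmax) * (\<Sum>i=1..z. s i j) / d j + rmax"

definition potential :: "nat \<Rightarrow> nat \<Rightarrow> (nat \<Rightarrow> real) \<Rightarrow> real \<Rightarrow> real \<Rightarrow> (nat \<Rightarrow> nat \<Rightarrow> real) \<Rightarrow> real" where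
  "potential m n d rmax rmin s = (\<Sum>j=1..n. \<Sum>i=1..m. (partial_rate d rmax rmin s j i - rmin) * s i j)"

end

theory Submission
  imports Defs
begin

lemma tri: "(\<Sum>i=1..m. (\<Sum>l=1..i. x l) * x i) = ((\<Sum>i=1..m. x i)^2 + (\<Sum>i=1..m. (x i)^2))/2"
  for x :: "nat \<Rightarrow> real"
  by (induction m) (simp_all add: power2_eq_square algebra_simps)

lemma pot_eq: "potential m n d rmax rmin s =
  (\<Sum>j=1..n. (rmin - rmax) / d j * (((\<Sum>i=1..m. s i j)^2 + (\<Sum>i=1..m. (s i j)^2))/2)
     + (rmax - rmin) * (\<Sum>i=1..m. s i j))"
proof -
  have "(\<Sum>i=1..m. (partial_rate d rmax rmin s j i - rmin) * s i j) =
     (rmin - rmax) / d j * (\<Sum>i=1..m. (\<Sum>l=1..i. s l j) * s i j) + (rmax - rmin) * (\<Sum>i=1..m. s i j)" for j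
    by (simp add: partial_rate_def sum_distrib_left sum_divide_distrib sum.distrib[symmetric] algebra_simps)
  then show ?thesis unfolding potential_def tri by (intro sum.cong) simp_all
qed

lemma upd_sum: "k \<in> {1..m} \<Longrightarrow> (\<Sum>i=1..m. g ((s(k:=v)) i)) = g v + (\<Sum>i\<in>{1..m}-{k}. g (s i))" for k m :: nat
proof -
  assume k: "k \<in> {1..m}"
  have "(\<Sum>i=1..m. g ((s(k:=v)) i)) = g ((s(k:=v)) k) + (\<Sum>i\<in>{1..m}-{k}. g ((s(k:=v)) i))"
    by (rule sum.remove[OF finite_atLeastAtMost k])
  also have "(\<Sum>i\<in>{1..m}-{k}. g ((s(k:=v)) i)) = (\<Sum>i\<in>{1..m}-{k}. g (s i))" for k m :: nat
    by (rule sum.cong) auto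
  finally show ?thesis by simp
qed

theorem theorem2p1:
  fixes m n :: nat and c d :: "nat \<Rightarrow> real" and rmax rmin :: real
  assumes "m > 0" and "n > 0"
    and "\<forall>i\<in>{1..m}. c i > 0" and "\<forall>j\<in>{1..n}. d j > 0"
    and "0 < rmin" and "rmin < rmax"
  shows "\<forall>k\<in>{1..m}. \<forall>sk \<in> strategy_set n (c k). \<forall>sk' \<in> strategy_set n (c k).
           \<forall>s \<in> profile_space m n c.
             potential m n d rmax rmin (s(k := sk')) - potential m n d rmax rmin (s(k := sk))
             = utility m n d rmax rmin (s(k := sk')) k - utility m n d rmax rmin (s(k := sk)) k"
proof (intro ballI)
  fix k sk sk' s assume k: "k \<in> {1..m}"
  define R :: "nat \<Rightarrow> real" where "R j = (\<Sum>i\<in>{1..m}-{k}. s i j)" for j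
  define Q :: "nat \<Rightarrow> real" where "Q j = (\<Sum>i\<in>{1..m}-{k}. (s i j)^2)" for j
  have S: "(\<Sum>i=1..m. (s(k:=v)) i j) = v j + R j" for v j
    using upd_sum[OF k, of "\<lambda>x. x j" s v] by (simp add: R_def)
  have Sq: "(\<Sum>i=1..m. ((s(k:=v)) i j)^2) = (v j)^2 + Q j" for v j
    using upd_sum[OF k, of "\<lambda>x. (x j)^2" s v] by (simp add: Q_def)
  have P: "potential m n d rmax rmin (s(k:=v)) =
    (\<Sum>j=1..n. (rmin - rmax) / d j * (((v j + R j)^2 + ((v j)^2 + Q j))/2) + (rmax - rmin) * (v j + R j))" for v
    unfolding pot_eq S Sq ..
  have U: "utility m n d rmax rmin (s(k:=v)) k =
    (\<Sum>j=1..n. ((rmin - rmax) * (v j + R j) / d j + rmax - rmin) * v j)" for v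
    unfolding utility_def interest_rate_def S by simp
  show "potential m n d rmax rmin (s(k := sk')) - potential m n d rmax rmin (s(k := sk))
             = utility m n d rmax rmin (s(k := sk')) k - utility m n d rmax rmin (s(k := sk)) k"
    unfolding P U sum_subtractf[symmetric]
    apply (rule sum.cong[OF refl])
    subgoal for j
    proof -
      assume "j \<in> {1..n}"
      then have "d j \<noteq> 0" using assms(4) by force
      then show ?thesis by (simp add: field_simps power2_eq_square)
    qed
    done
qed

end
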